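(* Suppose treatment assignment is ignorable given covariates $\mathbf{x}$ with aliasing by the function $\beta(\mathbf{x},\mathbf{w})$. Let $\mathbf{e}(\mathbf{x})=(\Pr(Z_1=1\mid\mathbf{x}),\ldots,\Pr(Z_G=1\mid\mathbf{x}))$ and let $\mathbf{f}(\cdot)$ be any (measurable) function. Then (a) $\mathbf{Z}$ is conditionally independent of $\{r_1-\beta(\mathbf{x},\mathbf{w}_1),\ldots,r_G-\beta(\mathbf{x},\mathbf{w}_G)\}$ given $\{\mathbf{e}(\mathbf{x}),\mathbf{f}(\mathbf{x})\}$; (b) $0<\Pr\{Z_g=1\mid \mathbf{e}(\mathbf{x}),\mathbf{f}(\mathbf{x})\}<1$ for $g=1,\ldots,G$; (c) if in addition the contrast $h_1,\ldots,h_G$ (constants with $\sum_g h_g=0$, not all zero) is not aliased with $\beta(\mathbf{x},\mathbf{w})$, then $$\mathrm{E}\Big\{\sum_{g=1}^G h_g r_g\,\Big|\,\mathbf{e}(\mathbf{x}),\mathbf{f}(\mathbf{x})\Big\}=\sum_{g=1}^G h_g\,\mathrm{E}\big\{R\,\big|\,Z_g=1,\mathbf{e}(\mathbf{x}),\mathbf{f}(\mathbf{x})\big\}.$$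
   Context: There are $G$ treatment groups. Each individual has a random vector $\mathbf{Z}=(Z_1,\ldots,Z_G)$ with $Z_g\in\{0,1\}$ and $\sum_{g=1}^G Z_g=1$. Each individual has observed covariates $\mathbf{x}$ and observed "eligibility" covariates $\mathbf{w}$; there are fixed distinct values $\mathbf{w}_1,\ldots,\mathbf{w}_G$ such that $Z_g=1$ if and only if $\mathbf{w}=\mathbf{w}_g$. Each individual has potential responses $r_1,\ldots,r_G$, and the observed response is $R=\sum_{g=1}^G Z_g r_g$. All expectations are assumed to exist. Definition (ignorable with aliasing): treatment assignment is ignorable given $\mathbf{x}$ with aliasing by a function $\beta(\mathbf{x},\mathbf{w})$ if (i) $\mathbf{Z}$ is conditionally independent of $\{r_1-\beta(\mathbf{x},\mathbf{w}_1),\ldots,r_G-\beta(\mathbf{x},\mathbf{w}_G)\}$ given $\mathbf{x}$, and (ii) $0<\Pr(Z_g=1\mid\mathbf{x})<1$ for $g=1,\ldots,G$. Definition (not aliased): a contrast $h_1,\ldots,h_G$ is not aliased with $\beta(\mathbf{x},\mathbf{w})$ if $\sum_{g=1}^G h_g\,\beta(\mathbf{x},\mathbf{w}_g)=0$ for all $\mathbf{x}$. *)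

theory Defs
  imports "HOL-Probability.Probability"
begin

definition cond_indep_given ::
  "'a measure \<Rightarrow> 'a measure \<Rightarrow> 'a measure \<Rightarrow> 'a measure \<Rightarrow> bool" where
  "cond_indep_given M A B F \<longleftrightarrow>
     (\<forall>S\<in>sets A. \<forall>T\<in>sets B. AE \<omega> in M.
        real_cond_exp M F (indicator (S \<inter> T)) \<omega>
          = real_cond_exp M F (indicator S) \<omega> * real_cond_exp M F (indicator T) \<omega>)"

definition cond_prob :: "'a measure \<Rightarrow> 'a measure \<Rightarrow> 'a set \<Rightarrow> 'a \<Rightarrow> real" where
  "cond_prob M F A = real_cond_exp M F (indicator A)"

definition cond_exp_event ::
  "'a measure \<Rightarrow> 'a measure \<Rightarrow> 'a set \<Rightarrow> ('a \<Rightarrow> real) \<Rightarrow> 'a \<Rightarrow> real" where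
  "cond_exp_event M F A X =
     (\<lambda>\<omega>. real_cond_exp M F (\<lambda>\<eta>. indicator A \<eta> * X \<eta>) \<omega> / cond_prob M F A \<omega>)"

definition gen_vec :: "'a measure \<Rightarrow> nat \<Rightarrow> (nat \<Rightarrow> 'a \<Rightarrow> real) \<Rightarrow> 'a measure" where
  "gen_vec M G V = vimage_algebra (space M) (\<lambda>\<omega>. restrict (\<lambda>g. V g \<omega>) {1..G})
                                  (PiM {1..G} (\<lambda>_. borel))"

text \<open>Ignorability given x with aliasing by beta (groups are indexed 1..G).
  Z g is the 0/1 indicator Z_g, r g is the potential response r_g, wg g is w_g.\<close>
definition ignorable_alias ::
  "'a measure \<Rightarrow> nat \<Rightarrow> 'x measure \<Rightarrow> ('a \<Rightarrow> 'x) \<Rightarrow> (nat \<Rightarrow> 'a \<Rightarrow> real)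
    \<Rightarrow> (nat \<Rightarrow> 'a \<Rightarrow> real) \<Rightarrow> ('x \<Rightarrow> 'w \<Rightarrow> real) \<Rightarrow> (nat \<Rightarrow> 'w) \<Rightarrow> bool" where
  "ignorable_alias M G X x Z r \<beta> wg \<longleftrightarrow>
     cond_indep_given M (gen_vec M G Z) (gen_vec M G (\<lambda>g \<omega>. r g \<omega> - \<beta> (x \<omega>) (wg g)))
       (vimage_algebra (space M) x X)
   \<and> (\<forall>g\<in>{1..G}. AE \<omega> in M.
        0 < cond_prob M (vimage_algebra (space M) x X) {\<eta>\<in>space M. Z g \<eta> = 1} \<omega>
      \<and> cond_prob M (vimage_algebra (space M) x X) {\<eta>\<in>space M. Z g \<eta> = 1} \<omega> < 1)"

definition not_aliased :: "nat \<Rightarrow> 'x measure \<Rightarrow> (nat \<Rightarrow> real) \<Rightarrow> ('x \<Rightarrow> 'w \<Rightarrow> real) \<Rightarrow> (nat \<Rightarrow> 'w) \<Rightarrow> bool" where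
  "not_aliased G X h \<beta> wg \<longleftrightarrow> (\<forall>\<xi>\<in>space X. (\<Sum>g\<in>{1..G}. h g * \<beta> \<xi> (wg g)) = 0)"

end

theory Submission
  imports Defs
begin

lemma core:
  fixes M :: "'a measure" and N :: "'b measure" and \<Phi> :: "'a \<Rightarrow> 'b" and w1 w2 :: "'a \<Rightarrow> real" and \<psi> :: "'b \<Rightarrow> real"
  assumes \<Phi>[measurable]: "\<Phi> \<in> measurable M N"
    and w1[measurable]: "w1 \<in> borel_measurable M" and w1p: "AE \<omega> in M. 0 \<le> w1 \<omega>"
    and w2[measurable]: "w2 \<in> borel_measurable M" and w2p: "AE \<omega> in M. 0 \<le> w2 \<omega>"
    and int1: "\<And>T. T \<in> sets N \<Longrightarrow> integrable M (\<lambda>\<omega>. w1 \<omega> * indicator (\<Phi> -` T \<inter> space M) \<omega>)"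
    and int2: "\<And>T. T \<in> sets N \<Longrightarrow> integrable M (\<lambda>\<omega>. w2 \<omega> * indicator (\<Phi> -` T \<inter> space M) \<omega>)"
    and eq: "\<And>T. T \<in> sets N \<Longrightarrow> (\<integral>\<omega>. w1 \<omega> * indicator (\<Phi> -` T \<inter> space M) \<omega> \<partial>M)
                                 = (\<integral>\<omega>. w2 \<omega> * indicator (\<Phi> -` T \<inter> space M) \<omega> \<partial>M)"
    and \<psi>[measurable]: "\<psi> \<in> borel_measurable N"
  shows "(\<integral>\<omega>. w1 \<omega> * \<psi> (\<Phi> \<omega>) \<partial>M) = (\<integral>\<omega>. w2 \<omega> * \<psi> (\<Phi> \<omega>) \<partial>M)"
proof -
  have em: "emeasure (distr (density M w) N \<Phi>) T = ennreal (\<integral>\<omega>. w \<omega> * indicator (\<Phi> -` T \<inter> space M) \<omega> \<partial>M)"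
    if [measurable]: "w \<in> borel_measurable M" and wp: "AE \<omega> in M. 0 \<le> w \<omega>"
      and wi: "integrable M (\<lambda>\<omega>. w \<omega> * indicator (\<Phi> -` T \<inter> space M) \<omega>)" and T: "T \<in> sets N" for w T
  proof -
    have S[measurable]: "\<Phi> -` T \<inter> space M \<in> sets M" using T by measurable
    have "emeasure (distr (density M w) N \<Phi>) T = emeasure (density M w) (\<Phi> -` T \<inter> space M)"
      by (subst emeasure_distr) (auto simp: T)
    also have "\<dots> = (\<integral>\<^sup>+ \<omega>. ennreal (w \<omega>) * indicator (\<Phi> -` T \<inter> space M) \<omega> \<partial>M)"
      by (rule emeasure_density) auto
    also have "\<dots> = (\<integral>\<^sup>+ \<omega>. ennreal (w \<omega> * indicator (\<Phi> -` T \<inter> space M) \<omega>) \<partial>M)"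
      by (rule nn_integral_cong) (auto simp: indicator_def)
    also have "\<dots> = ennreal (\<integral>\<omega>. w \<omega> * indicator (\<Phi> -` T \<inter> space M) \<omega> \<partial>M)"
      by (rule nn_integral_eq_integral[OF wi]) (use wp in \<open>auto simp: indicator_def\<close>)
    finally show ?thesis .
  qed
  have D: "distr (density M w1) N \<Phi> = distr (density M w2) N \<Phi>"
  proof (rule measure_eqI)
    show "sets (distr (density M w1) N \<Phi>) = sets (distr (density M w2) N \<Phi>)" by simp
    fix T assume "T \<in> sets (distr (density M w1) N \<Phi>)"
    hence T: "T \<in> sets N" by simp
    show "emeasure (distr (density M w1) N \<Phi>) T = emeasure (distr (density M w2) N \<Phi>) T"
      using em[OF w1 w1p int1[OF T] T] em[OF w2 w2p int2[OF T] T] eq[OF T] by simp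
  qed
  have "(\<integral>\<omega>. w1 \<omega> * \<psi> (\<Phi> \<omega>) \<partial>M) = integral\<^sup>L (density M w1) (\<lambda>\<omega>. \<psi> (\<Phi> \<omega>))"
    by (subst integral_density) (auto simp: w1p)
  also have "\<dots> = integral\<^sup>L (distr (density M w1) N \<Phi>) \<psi>"
    by (subst integral_distr) auto
  also have "\<dots> = integral\<^sup>L (distr (density M w2) N \<Phi>) \<psi>" by (simp add: D)
  also have "\<dots> = integral\<^sup>L (density M w2) (\<lambda>\<omega>. \<psi> (\<Phi> \<omega>))"
    by (subst integral_distr) auto
  also have "\<dots> = (\<integral>\<omega>. w2 \<omega> * \<psi> (\<Phi> \<omega>) \<partial>M)"
    by (subst integral_density) (auto simp: w2p)
  finally show ?thesis .
qed

lemma ext_ci: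
  fixes M :: "'a measure" and N :: "'b measure" and \<Phi> :: "'a \<Rightarrow> 'b" and \<psi> :: "'b \<Rightarrow> real"
  assumes P: "prob_space M" and H: "subalgebra M H"
   and A[measurable]: "A \<in> sets M" and \<Phi>[measurable]: "\<Phi> \<in> measurable M N" and \<psi>[measurable]: "\<psi> \<in> borel_measurable N"
   and Vint: "integrable M (\<lambda>\<omega>. \<psi> (\<Phi> \<omega>))"
   and ci: "\<And>T. T \<in> sets N \<Longrightarrow> AE \<omega> in M. real_cond_exp M H (indicator (A \<inter> (\<Phi> -` T \<inter> space M))) \<omega>
      = real_cond_exp M H (indicator A) \<omega> * real_cond_exp M H (indicator (\<Phi> -` T \<inter> space M)) \<omega>"
  shows "AE \<omega> in M. real_cond_exp M H (\<lambda>\<eta>. indicator A \<eta> * \<psi> (\<Phi> \<eta>)) \<omega>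
      = real_cond_exp M H (indicator A) \<omega> * real_cond_exp M H (\<lambda>\<eta>. \<psi> (\<Phi> \<eta>)) \<omega>"
proof -
  interpret prob_space M by (rule P)
  interpret S: finite_measure_subalgebra M H by unfold_locales (rule H)
  define p where "p = real_cond_exp M H (indicator A)"
  define V where "V = (\<lambda>\<eta>. \<psi> (\<Phi> \<eta>))"
  define EV where "EV = real_cond_exp M H V"
  have Vm[measurable]: "V \<in> borel_measurable M" unfolding V_def by measurable
  have pH[measurable]: "p \<in> borel_measurable H" unfolding p_def by measurable
  have pM[measurable]: "p \<in> borel_measurable M" unfolding p_def by measurable
  have EVH[measurable]: "EV \<in> borel_measurable H" unfolding EV_def by measurable
  have EVM[measurable]: "EV \<in> borel_measurable M" unfolding EV_def by measurable
  have EVi: "integrable M EV" unfolding EV_def using S.real_cond_exp_int(1) Vint V_def by auto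
  have Vi: "integrable M V" using Vint V_def by simp
  have ind: "integrable M (indicator D :: 'a \<Rightarrow> real)" if "D \<in> sets M" for D
    using that by (intro integrable_real_indicator) (auto simp: less_top[symmetric])
  have p0: "AE \<omega> in M. 0 \<le> p \<omega>" unfolding p_def by (rule S.real_cond_exp_pos) auto
  have "AE \<omega> in M. real_cond_exp M H (indicator A) \<omega> \<le> real_cond_exp M H (\<lambda>_. 1) \<omega>"
    by (rule S.real_cond_exp_mono) (auto simp: indicator_def intro!: ind)
  moreover have "AE \<omega> in M. real_cond_exp M H (\<lambda>_. 1) \<omega> = 1"
    by (rule S.real_cond_exp_F_meas) auto
  ultimately have p1: "AE \<omega> in M. p \<omega> \<le> 1" unfolding p_def by eventually_elim auto
  have bnd: "integrable M (\<lambda>\<omega>. indicator B \<omega> * p \<omega> * h \<omega>)" if "integrable M h" "B \<in> sets M" for h B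
    by (rule Bochner_Integration.integrable_bound[OF that(1)]) (use p0 p1 that in \<open>auto simp: abs_mult indicator_def intro!: mult_left_le_one_le\<close>)
  have "AE \<omega> in M. real_cond_exp M H (\<lambda>\<eta>. indicator A \<eta> * V \<eta>) \<omega> = p \<omega> * EV \<omega>"
  proof (rule S.real_cond_exp_charact)
    show "integrable M (\<lambda>\<eta>. indicator A \<eta> * V \<eta>)" using integrable_mult_indicator[OF A Vi] by simp
    show "integrable M (\<lambda>\<omega>. p \<omega> * EV \<omega>)"
      by (rule Bochner_Integration.integrable_bound[OF EVi]) (use p0 p1 in \<open>auto simp: abs_mult intro!: mult_left_le_one_le\<close>)
    show "(\<lambda>\<omega>. p \<omega> * EV \<omega>) \<in> borel_measurable H" by measurable
    fix B assume BH[measurable]: "B \<in> sets H"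
    have B[measurable]: "B \<in> sets M" using BH H by (auto simp: subalgebra_def)
    have "(\<integral>\<omega>. (indicator B \<omega> * indicator A \<omega>) * V \<omega> \<partial>M) = (\<integral>\<omega>. (indicator B \<omega> * p \<omega>) * V \<omega> \<partial>M)"
      unfolding V_def
    proof (rule core[OF \<Phi>])
      fix T assume T[measurable]: "T \<in> sets N"
      define C where "C = \<Phi> -` T \<inter> space M"
      have C[measurable]: "C \<in> sets M" unfolding C_def by measurable
      have "(\<integral>\<omega>. (indicator B \<omega> :: real) * indicator A \<omega> * indicator C \<omega> \<partial>M)
          = (\<integral>\<omega>. indicator B \<omega> * indicator (A \<inter> C) \<omega> \<partial>M)"
        by (rule Bochner_Integration.integral_cong) (auto simp: indicator_def)
      also have "\<dots> = (\<integral>\<omega>. indicator B \<omega> * real_cond_exp M H (indicator (A \<inter> C)) \<omega> \<partial>M)"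
        by (rule S.real_cond_exp_intg(2)[symmetric]) (auto simp: indicator_def intro!: Bochner_Integration.integrable_bound[where f="\<lambda>_. 1::real"])
      also have "\<dots> = (\<integral>\<omega>. (indicator B \<omega> * p \<omega>) * real_cond_exp M H (indicator C) \<omega> \<partial>M)"
        by (rule integral_cong_AE) (use ci[OF T] in \<open>auto simp: p_def C_def\<close>)
      also have "\<dots> = (\<integral>\<omega>. (indicator B \<omega> * p \<omega>) * indicator C \<omega> \<partial>M)"
        by (rule S.real_cond_exp_intg(2)) (auto intro!: bnd ind)
      finally show "(\<integral>\<omega>. (indicator B \<omega> :: real) * indicator A \<omega> * indicator (\<Phi> -` T \<inter> space M) \<omega> \<partial>M) =
          (\<integral>\<omega>. indicator B \<omega> * p \<omega> * indicator (\<Phi> -` T \<inter> space M) \<omega> \<partial>M)" unfolding C_def .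
      show "integrable M (\<lambda>\<omega>. (indicator B \<omega> :: real) * indicator A \<omega> * indicator (\<Phi> -` T \<inter> space M) \<omega>)"
      proof -
        have "(\<lambda>\<omega>. (indicator B \<omega> :: real) * indicator A \<omega> * indicator C \<omega>) = indicator (B \<inter> A \<inter> C)"
          by (rule ext) (simp add: indicator_inter_arith)
        then show ?thesis using ind[of "B \<inter> A \<inter> C"] by (simp add: C_def)
      qed
      show "integrable M (\<lambda>\<omega>. indicator B \<omega> * p \<omega> * indicator (\<Phi> -` T \<inter> space M) \<omega>)"
        by (rule bnd) (auto intro!: ind)
    qed (use p0 in auto)
    also have "\<dots> = (\<integral>\<omega>. (indicator B \<omega> * p \<omega>) * EV \<omega> \<partial>M)"
      unfolding EV_def by (rule S.real_cond_exp_intg(2)[symmetric]) (auto intro!: bnd Vi)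
    finally show "(\<integral>\<omega>\<in>B. indicator A \<omega> * V \<omega> \<partial>M) = (\<integral>\<omega>\<in>B. p \<omega> * EV \<omega> \<partial>M)"
      by (simp add: set_lebesgue_integral_def mult.assoc)
  qed
  then show ?thesis by (simp add: p_def EV_def V_def)
qed

lemma tower:
  assumes P: "prob_space M" and H: "subalgebra M H" and HF: "subalgebra H F"
    and q[measurable]: "q \<in> borel_measurable F" and u: "integrable M u" and v: "integrable M v"
    and eq: "AE \<omega> in M. real_cond_exp M H u \<omega> = q \<omega> * real_cond_exp M H v \<omega>"
  shows "AE \<omega> in M. real_cond_exp M F u \<omega> = q \<omega> * real_cond_exp M F v \<omega>"
proof -
  interpret prob_space M by (rule P)
  have MF: "subalgebra M F" using H HF by (auto simp: subalgebra_def)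
  interpret SH: finite_measure_subalgebra M H by unfold_locales (rule H)
  interpret SF: finite_measure_subalgebra M F by unfold_locales (rule MF)
  have qM[measurable]: "q \<in> borel_measurable M" by (rule measurable_from_subalg[OF MF q])
  have "integrable M (\<lambda>\<omega>. q \<omega> * real_cond_exp M H v \<omega>)"
    by (rule integrable_cong_AE_imp[OF SH.real_cond_exp_int(1)[OF u]]) (use eq in auto)
  note qi = this
  have "AE \<omega> in M. real_cond_exp M F u \<omega> = real_cond_exp M F (real_cond_exp M H u) \<omega>"
    using SF.real_cond_exp_nested_subalg[OF H HF u] by auto
  moreover have "AE \<omega> in M. real_cond_exp M F (real_cond_exp M H u) \<omega> = real_cond_exp M F (\<lambda>\<omega>. q \<omega> * real_cond_exp M H v \<omega>) \<omega>"
    by (rule SF.real_cond_exp_cong) (use eq in auto)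
  moreover have "AE \<omega> in M. real_cond_exp M F (\<lambda>\<omega>. q \<omega> * real_cond_exp M H v \<omega>) \<omega> = q \<omega> * real_cond_exp M F (real_cond_exp M H v) \<omega>"
    by (rule SF.real_cond_exp_mult) (auto intro: qi)
  moreover have "AE \<omega> in M. real_cond_exp M F (real_cond_exp M H v) \<omega> = real_cond_exp M F v \<omega>"
    by (rule SF.real_cond_exp_nested_subalg[OF H HF v])
  ultimately show ?thesis by eventually_elim auto
qed

theorem proposition3:
  fixes M :: "'a measure" and G :: nat
    and X :: "'x measure" and x :: "'a \<Rightarrow> 'x"
    and W :: "'w measure" and w :: "'a \<Rightarrow> 'w" and wg :: "nat \<Rightarrow> 'w"
    and Z :: "nat \<Rightarrow> 'a \<Rightarrow> real" and r :: "nat \<Rightarrow> 'a \<Rightarrow> real"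
    and \<beta> :: "'x \<Rightarrow> 'w \<Rightarrow> real"
    and e :: "nat \<Rightarrow> 'x \<Rightarrow> real"
    and Y :: "'y measure" and f :: "'x \<Rightarrow> 'y"
  assumes prob: "prob_space M"
    and x_meas: "x \<in> measurable M X"
    and w_meas: "w \<in> measurable M W"
    and wg_distinct: "inj_on wg {1..G}"
    and Z_meas: "\<And>g. g \<in> {1..G} \<Longrightarrow> Z g \<in> borel_measurable M"
    and Z_01: "\<And>g \<omega>. g \<in> {1..G} \<Longrightarrow> \<omega> \<in> space M \<Longrightarrow> Z g \<omega> \<in> {0, 1}"
    and Z_sum: "\<And>\<omega>. \<omega> \<in> space M \<Longrightarrow> (\<Sum>g\<in>{1..G}. Z g \<omega>) = 1"
    and eligibility: "\<And>g \<omega>. g \<in> {1..G} \<Longrightarrow> \<omega> \<in> space M \<Longrightarrow> (Z g \<omega> = 1 \<longleftrightarrow> w \<omega> = wg g)"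
    and r_int: "\<And>g. g \<in> {1..G} \<Longrightarrow> integrable M (r g)"
    and \<beta>_meas: "\<And>g. g \<in> {1..G} \<Longrightarrow> (\<lambda>\<xi>. \<beta> \<xi> (wg g)) \<in> borel_measurable X"
    and \<beta>_int: "\<And>g. g \<in> {1..G} \<Longrightarrow> integrable M (\<lambda>\<omega>. \<beta> (x \<omega>) (wg g))"
    and ignorable: "ignorable_alias M G X x Z r \<beta> wg"
    and e_meas: "\<And>g. g \<in> {1..G} \<Longrightarrow> e g \<in> borel_measurable X"
    and e_def: "\<And>g. g \<in> {1..G} \<Longrightarrow> AE \<omega> in M.
                  e g (x \<omega>) = cond_prob M (vimage_algebra (space M) x X) {\<eta>\<in>space M. Z g \<eta> = 1} \<omega>"
    and f_meas: "f \<in> measurable X Y"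
  defines "F \<equiv> vimage_algebra (space M) (\<lambda>\<omega>. (restrict (\<lambda>g. e g (x \<omega>)) {1..G}, f (x \<omega>)))
                                 (PiM {1..G} (\<lambda>_. borel) \<Otimes>\<^sub>M Y)"
  shows "cond_indep_given M (gen_vec M G Z) (gen_vec M G (\<lambda>g \<omega>. r g \<omega> - \<beta> (x \<omega>) (wg g))) F
    \<and> (\<forall>g\<in>{1..G}. (AE \<omega> in M.
           0 < cond_prob M F {\<eta>\<in>space M. Z g \<eta> = 1} \<omega> \<and> cond_prob M F {\<eta>\<in>space M. Z g \<eta> = 1} \<omega> < 1))
    \<and> (\<forall>h :: nat \<Rightarrow> real. (\<Sum>g\<in>{1..G}. h g) = 0 \<longrightarrow> (\<exists>g\<in>{1..G}. h g \<noteq> 0) \<longrightarrow>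
           not_aliased G X h \<beta> wg \<longrightarrow>
           (AE \<omega> in M. real_cond_exp M F (\<lambda>\<eta>. \<Sum>g\<in>{1..G}. h g * r g \<eta>) \<omega>
             = (\<Sum>g\<in>{1..G}. h g * cond_exp_event M F {\<eta>\<in>space M. Z g \<eta> = 1}
                                     (\<lambda>\<eta>. \<Sum>k\<in>{1..G}. Z k \<eta> * r k \<eta>) \<omega>)))"
proof -
  interpret prob_space M by (rule prob)
  note [measurable] = x_meas f_meas
  have Zm[measurable]: "Z g \<in> borel_measurable M" if "g \<in> {1..G}" for g using Z_meas that by auto
  have em[measurable]: "e g \<in> borel_measurable X" if "g \<in> {1..G}" for g using e_meas that by auto
  have bm[measurable]: "(\<lambda>\<xi>. \<beta> \<xi> (wg g)) \<in> borel_measurable X" if "g \<in> {1..G}" for g using \<beta>_meas that by auto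
  have rm[measurable]: "r g \<in> borel_measurable M" if "g \<in> {1..G}" for g using r_int that by auto
  define Fx where "Fx = vimage_algebra (space M) x X"
  define \<psi> where "\<psi> = (\<lambda>\<xi>. (restrict (\<lambda>g. e g \<xi>) {1..G}, f \<xi>))"
  have \<psi>m: "\<psi> \<in> measurable X (PiM {1..G} (\<lambda>_. borel) \<Otimes>\<^sub>M Y)"
    unfolding \<psi>_def by measurable
  have F_eq: "F = vimage_algebra (space M) (\<lambda>\<omega>. \<psi> (x \<omega>)) (PiM {1..G} (\<lambda>_. borel) \<Otimes>\<^sub>M Y)"
    unfolding F_def \<psi>_def by simp
  have xFx: "x \<in> measurable Fx X"
    unfolding Fx_def by (rule measurable_vimage_algebra1) (use x_meas in \<open>auto simp: measurable_def\<close>)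
  have MFx: "subalgebra M Fx"
    unfolding subalgebra_def Fx_def using sets_image_in_sets[OF refl x_meas] by auto
  have FxF: "subalgebra Fx F"
    unfolding subalgebra_def F_eq using sets_image_in_sets[OF _ measurable_comp[OF xFx \<psi>m]] by (auto simp: Fx_def o_def)
  have MF: "subalgebra M F" using MFx FxF by (auto simp: subalgebra_def)
  interpret SX: finite_measure_subalgebra M Fx by unfold_locales (rule MFx)
  interpret SF: finite_measure_subalgebra M F by unfold_locales (rule MF)
  have \<psi>xF: "(\<lambda>\<omega>. \<psi> (x \<omega>)) \<in> measurable F (PiM {1..G} (\<lambda>_. borel) \<Otimes>\<^sub>M Y)"
    unfolding F_eq by (rule measurable_vimage_algebra1) (use measurable_comp[OF x_meas \<psi>m] in \<open>auto simp: measurable_def\<close>)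
  have exF[measurable]: "(\<lambda>\<omega>. e g (x \<omega>)) \<in> borel_measurable F" if g: "g \<in> {1..G}" for g
  proof -
    have "(\<lambda>p. fst p g) \<in> borel_measurable (PiM {1..G} (\<lambda>_. borel) \<Otimes>\<^sub>M Y)"
      using g by measurable
    from measurable_comp[OF \<psi>xF this] show ?thesis using g by (simp add: \<psi>_def o_def)
  qed
  define A where "A = (\<lambda>g. {\<eta>\<in>space M. Z g \<eta> = 1})"
  have Am[measurable]: "A g \<in> sets M" if "g \<in> {1..G}" for g
    unfolding A_def using that by measurable
  have ind: "integrable M (indicator D :: 'a \<Rightarrow> real)" if "D \<in> sets M" for D
    using that by (intro integrable_real_indicator) (auto simp: less_top[symmetric])
  have uniq: "\<exists>!g0. g0 \<in> {1..G} \<and> Z g0 \<omega> = 1" if \<omega>: "\<omega> \<in> space M" for \<omega>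
  proof -
    have ex: "\<exists>g0\<in>{1..G}. Z g0 \<omega> = 1"
    proof (rule ccontr)
      assume "\<not> ?thesis"
      hence "\<forall>g\<in>{1..G}. Z g \<omega> = 0" using Z_01[OF _ \<omega>] by blast
      hence "(\<Sum>g\<in>{1..G}. Z g \<omega>) = 0" by simp
      with Z_sum[OF \<omega>] show False by simp
    qed
    moreover have "a = b" if "a \<in> {1..G}" "Z a \<omega> = 1" "b \<in> {1..G}" "Z b \<omega> = 1" for a b
    proof (rule ccontr)
      assume ab: "a \<noteq> b"
      have nn: "\<forall>g\<in>{1..G}. 0 \<le> Z g \<omega>" using Z_01[OF _ \<omega>] by force
      have "(\<Sum>g\<in>{a,b}. Z g \<omega>) \<le> (\<Sum>g\<in>{1..G}. Z g \<omega>)"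
        by (rule sum_mono2) (use that nn in auto)
      with ab that Z_sum[OF \<omega>] show False by simp
    qed
    ultimately show ?thesis by blast
  qed
  have Zother: "Z k \<omega> = 0" if "\<omega> \<in> space M" "g \<in> {1..G}" "Z g \<omega> = 1" "k \<in> {1..G}" "k \<noteq> g" for \<omega> g k
    using uniq[OF that(1)] Z_01[OF that(4,1)] that by auto
  have pF: "AE \<omega> in M. cond_prob M F (A g) \<omega> = e g (x \<omega>)" if g: "g \<in> {1..G}" for g
  proof -
    have ex_i: "integrable M (\<lambda>\<omega>. e g (x \<omega>))"
      by (rule integrable_cong_AE_imp[OF SX.real_cond_exp_int(1)[OF ind[OF Am[OF g]]]])
         (use e_def[OF g] g in \<open>auto simp: cond_prob_def A_def Fx_def\<close>)
    have "AE \<omega> in M. real_cond_exp M F (indicator (A g)) \<omega> = real_cond_exp M F (real_cond_exp M Fx (indicator (A g))) \<omega>"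
      using SF.real_cond_exp_nested_subalg[OF MFx FxF ind[OF Am[OF g]]] by auto
    moreover have "AE \<omega> in M. real_cond_exp M F (real_cond_exp M Fx (indicator (A g))) \<omega> = real_cond_exp M F (\<lambda>\<omega>. e g (x \<omega>)) \<omega>"
      by (rule SF.real_cond_exp_cong) (use e_def[OF g] g in \<open>auto simp: cond_prob_def A_def Fx_def\<close>)
    moreover have "AE \<omega> in M. real_cond_exp M F (\<lambda>\<omega>. e g (x \<omega>)) \<omega> = e g (x \<omega>)"
      by (rule SF.real_cond_exp_F_meas[OF ex_i exF[OF g]])
    ultimately show ?thesis unfolding cond_prob_def by eventually_elim auto
  qed
  have partb: "\<forall>g\<in>{1..G}. (AE \<omega> in M.
           0 < cond_prob M F {\<eta>\<in>space M. Z g \<eta> = 1} \<omega> \<and> cond_prob M F {\<eta>\<in>space M. Z g \<eta> = 1} \<omega> < 1)"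
  proof
    fix g assume g: "g \<in> {1..G}"
    have "AE \<omega> in M. 0 < cond_prob M Fx (A g) \<omega> \<and> cond_prob M Fx (A g) \<omega> < 1"
      using ignorable g unfolding ignorable_alias_def A_def Fx_def by auto
    with pF[OF g] e_def[OF g] show "AE \<omega> in M. 0 < cond_prob M F {\<eta>\<in>space M. Z g \<eta> = 1} \<omega> \<and> cond_prob M F {\<eta>\<in>space M. Z g \<eta> = 1} \<omega> < 1"
      unfolding A_def Fx_def by eventually_elim auto
  qed
  have tower0: "AE \<omega> in M. real_cond_exp M F u \<omega> = q \<omega>"
    if u: "integrable M u" and q[measurable]: "q \<in> borel_measurable F"
      and eq: "AE \<omega> in M. real_cond_exp M Fx u \<omega> = q \<omega>" for u q
  proof -
    have qM[measurable]: "q \<in> borel_measurable M" by (rule measurable_from_subalg[OF MF q])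
    have qi: "integrable M q"
      by (rule integrable_cong_AE_imp[OF SX.real_cond_exp_int(1)[OF u]]) (use eq in auto)
    have "AE \<omega> in M. real_cond_exp M F u \<omega> = real_cond_exp M F (real_cond_exp M Fx u) \<omega>"
      using SF.real_cond_exp_nested_subalg[OF MFx FxF u] by auto
    moreover have "AE \<omega> in M. real_cond_exp M F (real_cond_exp M Fx u) \<omega> = real_cond_exp M F q \<omega>"
      by (rule SF.real_cond_exp_cong) (use eq in auto)
    moreover have "AE \<omega> in M. real_cond_exp M F q \<omega> = q \<omega>"
      by (rule SF.real_cond_exp_F_meas[OF qi q])
    ultimately show ?thesis by eventually_elim auto
  qed
  define Zv where "Zv = (\<lambda>\<omega>. restrict (\<lambda>g. Z g \<omega>) {1..G})"
  have Zvm[measurable]: "Zv \<in> measurable M (PiM {1..G} (\<lambda>_. borel))"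
    unfolding Zv_def by measurable
  define V where "V = (\<lambda>g \<omega>. r g \<omega> - \<beta> (x \<omega>) (wg g))"
  define Vv where "Vv = (\<lambda>\<omega>. restrict (\<lambda>g. V g \<omega>) {1..G})"
  have Vvm[measurable]: "Vv \<in> measurable M (PiM {1..G} (\<lambda>_. borel))"
    unfolding Vv_def V_def by measurable
  have gZ: "gen_vec M G Z = vimage_algebra (space M) Zv (PiM {1..G} (\<lambda>_. borel))"
    unfolding gen_vec_def Zv_def ..
  have gV: "gen_vec M G V = vimage_algebra (space M) Vv (PiM {1..G} (\<lambda>_. borel))"
    unfolding gen_vec_def Vv_def ..
  have gZM: "sets (gen_vec M G Z) \<subseteq> sets M" unfolding gZ by (rule sets_image_in_sets[OF refl Zvm])
  have gVM: "sets (gen_vec M G V) \<subseteq> sets M" unfolding gV by (rule sets_image_in_sets[OF refl Vvm])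
  define A' where "A' = (\<lambda>g. if g \<in> {1..G} then A g else {})"
  have A'm: "A' g \<in> sets M" for g unfolding A'_def using Am by auto
  have qS: "\<exists>q. q \<in> borel_measurable F \<and> (AE \<omega> in M. real_cond_exp M Fx (indicator S) \<omega> = q \<omega>)"
    if S: "S \<in> sets (gen_vec M G Z)" for S
  proof -
    have "Zv \<in> space M \<rightarrow> space (PiM {1..G} (\<lambda>_. borel))"
      using measurable_space[OF Zvm] by auto
    from S[unfolded gZ sets_vimage_algebra2[OF this]] obtain C where
      C: "C \<in> sets (PiM {1..G} (\<lambda>_. borel))" and SC: "S = Zv -` C \<inter> space M" by auto
    define \<delta> where "\<delta> = (\<lambda>g0. restrict (\<lambda>k. if k = g0 then 1 else 0::real) {1..G})"
    define J where "J = {g\<in>{1..G}. \<delta> g \<in> C}"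
    have J: "J \<subseteq> {1..G}" "finite J" unfolding J_def by auto
    have dec: "(indicator S \<omega> :: real) = (\<Sum>g\<in>J. indicator (A' g) \<omega>)" if \<omega>: "\<omega> \<in> space M" for \<omega>
    proof -
      obtain g0 where g0: "g0 \<in> {1..G}" "Z g0 \<omega> = 1" using uniq[OF \<omega>] by blast
      have "Zv \<omega> = \<delta> g0"
        unfolding Zv_def \<delta>_def using Zother[OF \<omega> g0(1,2)] g0 by (auto simp: restrict_def)
      hence l: "indicator S \<omega> = (if g0 \<in> J then 1 else 0 :: real)"
        using \<omega> g0 by (auto simp: SC J_def)
      have "(\<Sum>g\<in>J. indicator (A' g) \<omega>) = (\<Sum>g\<in>J. if g = g0 then 1 else 0 :: real)"
        by (rule sum.cong) (use J Zother[OF \<omega> g0(1,2)] g0 \<omega> in \<open>auto simp: A'_def A_def indicator_def\<close>)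
      also have "\<dots> = (if g0 \<in> J then 1 else 0)" using J by simp
      finally show ?thesis using l by simp
    qed
    have Sm: "S \<in> sets M" using S gZM by auto
    have "AE \<omega> in M. real_cond_exp M Fx (indicator S) \<omega> = real_cond_exp M Fx (\<lambda>\<omega>. \<Sum>g\<in>J. indicator (A' g) \<omega>) \<omega>"
      by (rule SX.real_cond_exp_cong) (use dec Sm A'm in auto)
    moreover have "AE \<omega> in M. real_cond_exp M Fx (\<lambda>\<omega>. \<Sum>g\<in>J. indicator (A' g) \<omega>) \<omega> = (\<Sum>g\<in>J. real_cond_exp M Fx (indicator (A' g)) \<omega>)"
      by (rule SX.real_cond_exp_sum) (use ind A'm in auto)
    moreover have "AE \<omega> in M. \<forall>g\<in>J. real_cond_exp M Fx (indicator (A' g)) \<omega> = e g (x \<omega>)"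
      by (rule AE_finite_allI[OF J(2)]) (use e_def J in \<open>fastforce simp: A'_def A_def cond_prob_def Fx_def\<close>)
    ultimately have "AE \<omega> in M. real_cond_exp M Fx (indicator S) \<omega> = (\<Sum>g\<in>J. e g (x \<omega>))"
      by eventually_elim auto
    moreover have "(\<lambda>\<omega>. \<Sum>g\<in>J. e g (x \<omega>)) \<in> borel_measurable F"
      using J exF by (intro borel_measurable_sum) auto
    ultimately show ?thesis by blast
  qed
  have ign1: "cond_indep_given M (gen_vec M G Z) (gen_vec M G V) Fx"
    using ignorable unfolding ignorable_alias_def V_def Fx_def by blast
  have parta: "cond_indep_given M (gen_vec M G Z) (gen_vec M G V) F"
    unfolding cond_indep_given_def
  proof (intro ballI)
    fix S T assume S: "S \<in> sets (gen_vec M G Z)" and T: "T \<in> sets (gen_vec M G V)"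
    obtain q where q[measurable]: "q \<in> borel_measurable F" and qe: "AE \<omega> in M. real_cond_exp M Fx (indicator S) \<omega> = q \<omega>"
      using qS[OF S] by blast
    have Sm: "S \<in> sets M" and Tm: "T \<in> sets M" using S T gZM gVM by auto
    have "AE \<omega> in M. real_cond_exp M Fx (indicator (S \<inter> T)) \<omega> = real_cond_exp M Fx (indicator S) \<omega> * real_cond_exp M Fx (indicator T) \<omega>"
      using ign1 S T unfolding cond_indep_given_def by blast
    with qe have "AE \<omega> in M. real_cond_exp M Fx (indicator (S \<inter> T)) \<omega> = q \<omega> * real_cond_exp M Fx (indicator T) \<omega>"
      by eventually_elim auto
    from tower[OF prob MFx FxF q ind ind this] Sm Tm
    have 1: "AE \<omega> in M. real_cond_exp M F (indicator (S \<inter> T)) \<omega> = q \<omega> * real_cond_exp M F (indicator T) \<omega>"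
      by auto
    have 2: "AE \<omega> in M. real_cond_exp M F (indicator S) \<omega> = q \<omega>"
      by (rule tower0[OF ind[OF Sm] q qe])
    from 1 2 show "AE \<omega> in M. real_cond_exp M F (indicator (S \<inter> T)) \<omega> = real_cond_exp M F (indicator S) \<omega> * real_cond_exp M F (indicator T) \<omega>"
      by eventually_elim auto
  qed
  define R where "R = (\<lambda>\<eta>. \<Sum>k\<in>{1..G}. Z k \<eta> * r k \<eta>)"
  have per_g: "AE \<omega> in M. cond_exp_event M F (A g) R \<omega> = real_cond_exp M F (r g) \<omega>"
    if g: "g \<in> {1..G}" for g
  proof -
    define bx where "bx = (\<lambda>\<omega>. \<beta> (x \<omega>) (wg g))"
    have bxFx[measurable]: "bx \<in> borel_measurable Fx"
      unfolding bx_def using measurable_comp[OF xFx bm[OF g]] by (simp add: o_def)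
    have bxM[measurable]: "bx \<in> borel_measurable M" unfolding bx_def using g by measurable
    have bxi: "integrable M bx" unfolding bx_def by (rule \<beta>_int[OF g])
    have Vi: "integrable M (V g)" unfolding V_def using r_int[OF g] \<beta>_int[OF g] by auto
    have VM[measurable]: "V g \<in> borel_measurable M" using Vi by auto
    have rVb: "r g = (\<lambda>\<omega>. V g \<omega> + bx \<omega>)" unfolding V_def bx_def by auto
    have Ag[measurable]: "A g \<in> sets M" by (rule Am[OF g])
    have iAV: "integrable M (\<lambda>\<eta>. indicator (A g) \<eta> * V g \<eta>)" using integrable_mult_indicator[OF Ag Vi] by simp
    have iAb: "integrable M (\<lambda>\<eta>. indicator (A g) \<eta> * bx \<eta>)" using integrable_mult_indicator[OF Ag bxi] by simp
    have exFx: "AE \<omega> in M. real_cond_exp M Fx (indicator (A g)) \<omega> = e g (x \<omega>)"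
      using AE_symmetric[OF e_def[OF g]] by (simp add: cond_prob_def A_def Fx_def)
    have "AE \<omega> in M. real_cond_exp M Fx (\<lambda>\<eta>. indicator (A g) \<eta> * (\<lambda>v. v g) (Vv \<eta>)) \<omega>
      = real_cond_exp M Fx (indicator (A g)) \<omega> * real_cond_exp M Fx (\<lambda>\<eta>. (\<lambda>v. v g) (Vv \<eta>)) \<omega>"
    proof (rule ext_ci[OF prob MFx Ag Vvm])
      show "(\<lambda>v. v g) \<in> borel_measurable (PiM {1..G} (\<lambda>_. borel :: real measure))" using g by measurable
      show "integrable M (\<lambda>\<omega>. Vv \<omega> g)" using Vi g by (simp add: Vv_def)
      fix T' assume T': "T' \<in> sets (PiM {1..G} (\<lambda>_. borel :: real measure))"
      have Tin: "Vv -` T' \<inter> space M \<in> sets (gen_vec M G V)" unfolding gV by (rule in_vimage_algebra[OF T'])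
      have "Zv -` {v \<in> space (PiM {1..G} (\<lambda>_. borel :: real measure)). v g = 1} \<inter> space M \<in> sets (gen_vec M G Z)"
        unfolding gZ by (rule in_vimage_algebra) (use g in measurable)
      moreover have "Zv -` {v \<in> space (PiM {1..G} (\<lambda>_. borel :: real measure)). v g = 1} \<inter> space M = A g"
        using g by (auto simp: Zv_def A_def space_PiM)
      ultimately have Ain: "A g \<in> sets (gen_vec M G Z)" by simp
      show "AE \<omega> in M. real_cond_exp M Fx (indicator (A g \<inter> (Vv -` T' \<inter> space M))) \<omega> =
          real_cond_exp M Fx (indicator (A g)) \<omega> * real_cond_exp M Fx (indicator (Vv -` T' \<inter> space M)) \<omega>"
        using ign1 Ain Tin unfolding cond_indep_given_def by blast
    qed
    moreover have VvV: "Vv \<eta> g = V g \<eta>" for \<eta> using g by (simp add: Vv_def)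
    ultimately have "AE \<omega> in M. real_cond_exp M Fx (\<lambda>\<eta>. indicator (A g) \<eta> * V g \<eta>) \<omega>
      = real_cond_exp M Fx (indicator (A g)) \<omega> * real_cond_exp M Fx (V g) \<omega>" by (simp add: VvV)
    with exFx have "AE \<omega> in M. real_cond_exp M Fx (\<lambda>\<eta>. indicator (A g) \<eta> * V g \<eta>) \<omega>
      = e g (x \<omega>) * real_cond_exp M Fx (V g) \<omega>" by eventually_elim auto
    from tower[OF prob MFx FxF exF[OF g] iAV Vi this]
    have PV: "AE \<omega> in M. real_cond_exp M F (\<lambda>\<eta>. indicator (A g) \<eta> * V g \<eta>) \<omega> = e g (x \<omega>) * real_cond_exp M F (V g) \<omega>" .
    have "AE \<omega> in M. real_cond_exp M Fx (\<lambda>\<eta>. bx \<eta> * indicator (A g) \<eta>) \<omega> = bx \<omega> * real_cond_exp M Fx (indicator (A g)) \<omega>"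
      by (rule SX.real_cond_exp_mult) (use iAb in \<open>auto simp: mult.commute\<close>)
    moreover have "AE \<omega> in M. real_cond_exp M Fx bx \<omega> = bx \<omega>"
      by (rule SX.real_cond_exp_F_meas[OF bxi bxFx])
    ultimately have "AE \<omega> in M. real_cond_exp M Fx (\<lambda>\<eta>. indicator (A g) \<eta> * bx \<eta>) \<omega> = e g (x \<omega>) * real_cond_exp M Fx bx \<omega>"
      using exFx by eventually_elim (auto simp: mult.commute)
    from tower[OF prob MFx FxF exF[OF g] iAb bxi this]
    have Pb: "AE \<omega> in M. real_cond_exp M F (\<lambda>\<eta>. indicator (A g) \<eta> * bx \<eta>) \<omega> = e g (x \<omega>) * real_cond_exp M F bx \<omega>" .
    have iAR: "indicator (A g) \<eta> * R \<eta> = indicator (A g) \<eta> * V g \<eta> + indicator (A g) \<eta> * bx \<eta>"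
      if \<eta>: "\<eta> \<in> space M" for \<eta>
    proof (cases "Z g \<eta> = 1")
      case True
      have "R \<eta> = (\<Sum>k\<in>{1..G}. if k = g then r g \<eta> else 0)"
        unfolding R_def by (rule sum.cong) (use Zother[OF \<eta> g True] True in auto)
      also have "\<dots> = r g \<eta>" using g by simp
      finally show ?thesis by (simp add: rVb distrib_left)
    next
      case False
      then show ?thesis by (simp add: A_def)
    qed
    have Ri: "integrable M R" unfolding R_def
    proof (intro Bochner_Integration.integrable_sum)
      fix k assume k: "k \<in> {1..G}"
      show "integrable M (\<lambda>\<eta>. Z k \<eta> * r k \<eta>)"
      proof (rule Bochner_Integration.integrable_bound[OF r_int[OF k]])
        show "(\<lambda>\<eta>. Z k \<eta> * r k \<eta>) \<in> borel_measurable M" using k by measurable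
        show "AE \<eta> in M. norm (Z k \<eta> * r k \<eta>) \<le> norm (r k \<eta>)"
        proof (rule AE_I2)
          fix \<eta> assume "\<eta> \<in> space M"
          then have "Z k \<eta> \<in> {0,1}" using Z_01 k by auto
          then show "norm (Z k \<eta> * r k \<eta>) \<le> norm (r k \<eta>)" by auto
        qed
      qed
    qed
    have RM[measurable]: "R \<in> borel_measurable M" using Ri by auto
    have "AE \<omega> in M. real_cond_exp M F (\<lambda>\<eta>. indicator (A g) \<eta> * R \<eta>) \<omega>
        = real_cond_exp M F (\<lambda>\<eta>. indicator (A g) \<eta> * V g \<eta> + indicator (A g) \<eta> * bx \<eta>) \<omega>"
      by (rule SF.real_cond_exp_cong[OF AE_I2[OF iAR]]) measurable
    moreover have "AE \<omega> in M. real_cond_exp M F (\<lambda>\<eta>. indicator (A g) \<eta> * V g \<eta> + indicator (A g) \<eta> * bx \<eta>) \<omega>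
        = real_cond_exp M F (\<lambda>\<eta>. indicator (A g) \<eta> * V g \<eta>) \<omega> + real_cond_exp M F (\<lambda>\<eta>. indicator (A g) \<eta> * bx \<eta>) \<omega>"
      by (rule SF.real_cond_exp_add[OF iAV iAb])
    moreover have "AE \<omega> in M. real_cond_exp M F (r g) \<omega> = real_cond_exp M F (V g) \<omega> + real_cond_exp M F bx \<omega>"
      unfolding rVb by (rule SF.real_cond_exp_add[OF Vi bxi])
    moreover note PV Pb pF[OF g]
    moreover have "AE \<omega> in M. 0 < cond_prob M F (A g) \<omega>" using partb g unfolding A_def by auto
    ultimately show ?thesis unfolding cond_exp_event_def
    proof eventually_elim
      case (elim \<omega>)
      let ?p = "cond_prob M F (A g) \<omega>"
      have "real_cond_exp M F (\<lambda>\<eta>. indicator (A g) \<eta> * R \<eta>) \<omega> = ?p * real_cond_exp M F (r g) \<omega>"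
        using elim(1-6) by (simp add: distrib_left)
      then show ?case using elim(7) by simp
    qed
  qed
  have partc: "\<forall>h :: nat \<Rightarrow> real. (\<Sum>g\<in>{1..G}. h g) = 0 \<longrightarrow> (\<exists>g\<in>{1..G}. h g \<noteq> 0) \<longrightarrow>
           not_aliased G X h \<beta> wg \<longrightarrow>
           (AE \<omega> in M. real_cond_exp M F (\<lambda>\<eta>. \<Sum>g\<in>{1..G}. h g * r g \<eta>) \<omega>
             = (\<Sum>g\<in>{1..G}. h g * cond_exp_event M F {\<eta>\<in>space M. Z g \<eta> = 1}
                                     (\<lambda>\<eta>. \<Sum>k\<in>{1..G}. Z k \<eta> * r k \<eta>) \<omega>))"
  proof (intro allI impI)
    fix h :: "nat \<Rightarrow> real"
    define f' where "f' = (\<lambda>i \<eta>. if i \<in> {1..G} then h i * r i \<eta> else 0)"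
    have f'i: "integrable M (f' i)" for i
      by (cases "i \<in> {1..G}") (auto simp: f'_def intro!: r_int)
    have eqf: "(\<lambda>\<eta>. \<Sum>g\<in>{1..G}. f' g \<eta>) = (\<lambda>\<eta>. \<Sum>g\<in>{1..G}. h g * r g \<eta>)"
      by (rule ext, rule sum.cong) (auto simp: f'_def)
    have 1: "AE \<omega> in M. real_cond_exp M F (\<lambda>\<eta>. \<Sum>g\<in>{1..G}. h g * r g \<eta>) \<omega> = (\<Sum>g\<in>{1..G}. real_cond_exp M F (f' g) \<omega>)"
      using SF.real_cond_exp_sum[where I="{1..G}" and f="f'", OF f'i] unfolding eqf .
    have 2: "AE \<omega> in M. \<forall>g\<in>{1..G}. real_cond_exp M F (f' g) \<omega> = h g * real_cond_exp M F (r g) \<omega>"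
    proof (rule AE_finite_allI)
      fix g assume g: "g \<in> {1..G}"
      have "f' g = (\<lambda>\<eta>. h g * r g \<eta>)" using g by (auto simp: f'_def)
      then show "AE \<omega> in M. real_cond_exp M F (f' g) \<omega> = h g * real_cond_exp M F (r g) \<omega>"
        using SF.real_cond_exp_cmult[OF r_int[OF g], of "h g"] by simp
    qed simp
    have 3: "AE \<omega> in M. \<forall>g\<in>{1..G}. cond_exp_event M F (A g) R \<omega> = real_cond_exp M F (r g) \<omega>"
      by (rule AE_finite_allI) (auto intro: per_g)
    from 1 2 3 show "AE \<omega> in M. real_cond_exp M F (\<lambda>\<eta>. \<Sum>g\<in>{1..G}. h g * r g \<eta>) \<omega>
             = (\<Sum>g\<in>{1..G}. h g * cond_exp_event M F {\<eta>\<in>space M. Z g \<eta> = 1}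
                                     (\<lambda>\<eta>. \<Sum>k\<in>{1..G}. Z k \<eta> * r k \<eta>) \<omega>)"
    proof eventually_elim
      case (elim \<omega>)
      then show ?case unfolding A_def R_def by (auto intro!: sum.cong)
    qed
  qed
  show ?thesis using parta[unfolded V_def] partb partc by blast
qed

end
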